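(* Let $f$ be a $T$-norm with a differentiable additive generator $\mu$ such that $\frac{d\mu(x)}{dx}$ is nondecreasing. Then $f$ satisfies property $A$.
   Context: A $T$-norm is a function $f:[0,1]^2\to[0,1]$ that is commutative, associative, monotonic ($x\leq y$ implies $f(x,z)\leq f(y,z)$) and satisfies $f(x,1)=x$. An additive generator of $f$ is a strictly decreasing function $\mu:[0,1]\to[0,\infty]$, right-continuous at $0$, with $\mu(1)=0$, such that for all $x,y\in[0,1]$, $\mu(x)+\mu(y)\in \mathrm{Range}(\mu)\cup[\mu(0),\infty]$ and $f(x,y)=\mu^{(-1)}(\mu(x)+\mu(y))$, where $\mu^{(-1)}(t)=\sup\{x\in[0,1]:\mu(x)>t\}$ is the pseudo-inverse. A function $f:[0,1]^2\to[0,1]$ satisfies property $A$ if for all $0\leq x\leq y\leq z\leq w\leq 1$, $w+x\leq y+z$ implies $f(x,w)\leq f(y,z)$. *)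

theory Defs
  imports "HOL-Analysis.Analysis" "HOL-Library.Extended_Nonnegative_Real"
begin

definition tnorm :: "(real \<Rightarrow> real \<Rightarrow> real) \<Rightarrow> bool" where
  "tnorm f \<longleftrightarrow>
     (\<forall>x\<in>{0..1}. \<forall>y\<in>{0..1}. f x y \<in> {0..1}) \<and>
     (\<forall>x\<in>{0..1}. \<forall>y\<in>{0..1}. f x y = f y x) \<and>
     (\<forall>x\<in>{0..1}. \<forall>y\<in>{0..1}. \<forall>z\<in>{0..1}. f (f x y) z = f x (f y z)) \<and>
     (\<forall>x\<in>{0..1}. \<forall>y\<in>{0..1}. \<forall>z\<in>{0..1}. x \<le> y \<longrightarrow> f x z \<le> f y z) \<and>
     (\<forall>x\<in>{0..1}. f x 1 = x)"

definition pseudo_inv :: "(real \<Rightarrow> ennreal) \<Rightarrow> ennreal \<Rightarrow> real" where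
  "pseudo_inv \<mu> t = (if {x\<in>{0..1}. \<mu> x > t} = {} then 0 else Sup {x\<in>{0..1}. \<mu> x > t})"

definition additive_generator :: "(real \<Rightarrow> ennreal) \<Rightarrow> (real \<Rightarrow> real \<Rightarrow> real) \<Rightarrow> bool" where
  "additive_generator \<mu> f \<longleftrightarrow>
     (\<forall>x y. 0 \<le> x \<longrightarrow> x < y \<longrightarrow> y \<le> 1 \<longrightarrow> \<mu> y < \<mu> x) \<and>
     (\<mu> \<longlongrightarrow> \<mu> 0) (at_right 0) \<and>
     \<mu> 1 = 0 \<and>
     (\<forall>x\<in>{0..1}. \<forall>y\<in>{0..1}. \<mu> x + \<mu> y \<in> \<mu> ` {0..1} \<union> {\<mu> 0..}) \<and>
     (\<forall>x\<in>{0..1}. \<forall>y\<in>{0..1}. f x y = pseudo_inv \<mu> (\<mu> x + \<mu> y))"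

definition property_A :: "(real \<Rightarrow> real \<Rightarrow> real) \<Rightarrow> bool" where
  "property_A f \<longleftrightarrow>
     (\<forall>x y z w. 0 \<le> x \<longrightarrow> x \<le> y \<longrightarrow> y \<le> z \<longrightarrow> z \<le> w \<longrightarrow> w \<le> 1 \<longrightarrow>
        w + x \<le> y + z \<longrightarrow> f x w \<le> f y z)"

end

theory Submission
  imports Defs
begin


lemma mvt_step:
  fixes g g' :: "real \<Rightarrow> real"
  assumes d: "\<forall>x\<in>{0<..1}. (g has_real_derivative g' x) (at x within {0..1})"
    and a: "0 < a" "a < b" "b \<le> 1"
  shows "\<exists>z. a < z \<and> z < b \<and> g b - g a = (b - a) * g' z"
proof -
  have "continuous_on {a..b} g"
  proof -
    have "\<forall>x\<in>{a..b}. continuous (at x within {a..b}) g"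
    proof
      fix x assume x: "x \<in> {a..b}"
      then have "(g has_real_derivative g' x) (at x within {0..1})" using d a by auto
      then have "continuous (at x within {0..1}) g"
        by (rule DERIV_continuous)
      then show "continuous (at x within {a..b}) g"
        by (rule continuous_within_subset) (use a in auto)
    qed
    then show ?thesis by (simp add: continuous_on_eq_continuous_within)
  qed
  moreover have der: "(g has_real_derivative g' x) (at x)" if "a < x" "x < b" for x
  proof -
    have "(g has_real_derivative g' x) (at x within {0..1})" using d a that by auto
    moreover have "at x within {0..1} = at x"
      using that a by (intro at_within_Icc_at) auto
    ultimately show ?thesis by simp
  qed
  ultimately obtain l z where z: "a < z" "z < b" "DERIV g z :> l" "g b - g a = (b - a) * l"
    using MVT[OF a(2), of g] real_differentiable_def by blast
  have "l = g' z" using DERIV_unique[OF z(3) der[OF z(1,2)]] .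
  then show ?thesis using z by auto
qed

lemma four_point:
  fixes g g' :: "real \<Rightarrow> real"
  assumes d: "\<forall>x\<in>{0<..1}. (g has_real_derivative g' x) (at x within {0..1})"
    and m: "\<forall>x\<in>{0<..1}. \<forall>y\<in>{0<..1}. x \<le> y \<longrightarrow> g' x \<le> g' y"
    and o: "0 < a" "a \<le> b" "b \<le> c" "c \<le> d" "d \<le> 1" "a + d = b + c"
  shows "g b + g c \<le> g a + g d"
proof (cases "a = b")
  case True
  then have "c = d" using o by simp
  then show ?thesis using True by simp
next
  case False
  then have ab: "a < b" using o by simp
  have cd: "c < d" using o ab by simp
  obtain \<xi> where xi: "a < \<xi>" "\<xi> < b" "g b - g a = (b - a) * g' \<xi>"
    using mvt_step[OF d o(1) ab] o by auto
  obtain \<eta> where eta: "c < \<eta>" "\<eta> < d" "g d - g c = (d - c) * g' \<eta>"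
    using mvt_step[OF d _ cd] o by auto
  have "g' \<xi> \<le> g' \<eta>" using m xi eta o by auto
  moreover have "d - c = b - a" using o by simp
  ultimately have "(b - a) * g' \<xi> \<le> (d - c) * g' \<eta>"
    using ab by (simp add: mult_left_mono)
  then show ?thesis using xi eta by linarith
qed

lemma pinv_anti:
  assumes "s \<le> t"
  shows "pseudo_inv \<mu> t \<le> pseudo_inv \<mu> s"
proof -
  let ?S = "{x\<in>{0..1}. \<mu> x > s}" and ?T = "{x\<in>{0..1}. \<mu> x > t}"
  have sub: "?T \<subseteq> ?S" using assms by auto
  show ?thesis
  proof (cases "?T = {}")
    case True
    then show ?thesis
    proof (cases "?S = {}")
      case False
      then obtain x where "x \<in> ?S" by blast
      moreover have "bdd_above ?S" by (rule bdd_aboveI[of _ 1]) auto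
      ultimately have "x \<le> Sup ?S" by (rule cSup_upper)
      then show ?thesis using True False \<open>x \<in> ?S\<close> unfolding pseudo_inv_def by auto
    qed (simp add: pseudo_inv_def)
  next
    case False
    then have "?S \<noteq> {}" using sub by blast
    moreover have "bdd_above ?S" by (rule bdd_aboveI[of _ 1]) auto
    ultimately have "Sup ?T \<le> Sup ?S" using False sub by (intro cSup_subset_mono) auto
    then show ?thesis using False \<open>?S \<noteq> {}\<close> unfolding pseudo_inv_def by auto
  qed
qed

theorem corollary2:
  fixes f :: "real \<Rightarrow> real \<Rightarrow> real" and \<mu> :: "real \<Rightarrow> ennreal" and \<mu>' :: "real \<Rightarrow> real"
  assumes "tnorm f"
    and "additive_generator \<mu> f"
    and "\<forall>x\<in>{0<..1}. \<mu> x < \<infinity>"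
    and "\<forall>x\<in>{0<..1}. ((\<lambda>t. enn2real (\<mu> t)) has_real_derivative \<mu>' x) (at x within {0..1})"
    and "\<forall>x\<in>{0<..1}. \<forall>y\<in>{0<..1}. x \<le> y \<longrightarrow> \<mu>' x \<le> \<mu>' y"
  shows "property_A f"
  unfolding property_A_def
proof (intro allI impI)
  fix x y z w :: real
  assume h: "0 \<le> x" "x \<le> y" "y \<le> z" "z \<le> w" "w \<le> 1" "w + x \<le> y + z"
  define g where "g = (\<lambda>t. enn2real (\<mu> t))"
  have dec: "\<mu> b < \<mu> a" if "0 \<le> a" "a < b" "b \<le> 1" for a b
    using assms(2) that unfolding additive_generator_def by blast
  have fe: "f a b = pseudo_inv \<mu> (\<mu> a + \<mu> b)" if "a \<in> {0..1}" "b \<in> {0..1}" for a b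
    using assms(2) that unfolding additive_generator_def by blast
  show "f x w \<le> f y z"
  proof (cases "x = 0")
    case True
    have T: "\<forall>x\<in>{0..1}. \<forall>y\<in>{0..1}. f x y \<in> {0..1}"
      "\<forall>x\<in>{0..1}. \<forall>y\<in>{0..1}. f x y = f y x"
      "\<forall>x\<in>{0..1}. \<forall>y\<in>{0..1}. \<forall>z\<in>{0..1}. x \<le> y \<longrightarrow> f x z \<le> f y z"
      "\<forall>x\<in>{0..1}. f x 1 = x"
      using assms(1) unfolding tnorm_def by blast+
    have "f 0 w = f w 0" using T(2) h by auto
    also have "\<dots> \<le> f 1 0" using T(3) h by auto
    also have "\<dots> = f 0 1" using T(2) by auto
    also have "\<dots> = 0" using T(4) by auto
    finally have "f x w \<le> 0" using True by simp
    moreover have "0 \<le> f y z" using T(1) h by auto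
    ultimately show ?thesis by linarith
  next
    case False
    then have x0: "0 < x" using h by simp
    have fin: "\<mu> t = ennreal (g t)" if "0 < t" "t \<le> 1" for t
      using assms(3) that unfolding g_def
      by (intro ennreal_enn2real[symmetric]) (auto simp: less_top)
    define y' where "y' = x + w - z"
    have y': "x \<le> y'" "y' \<le> y" "y' \<le> z" using h by (auto simp: y'_def)
    have "g y' + g z \<le> g x + g w"
      using four_point[OF assms(4)[folded g_def] assms(5) x0 y'(1) y'(3) h(4) h(5)]
      by (simp add: y'_def)
    moreover have "g y \<le> g y'"
    proof (cases "y' = y")
      case False
      then have "\<mu> y < \<mu> y'" using dec y' x0 h by auto
      moreover have "\<mu> y' \<noteq> top" using assms(3) y' x0 h by (auto simp: less_top)
      ultimately show ?thesis unfolding g_def by (intro enn2real_mono) (auto simp: less_top)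
    qed simp
    ultimately have r: "g y + g z \<le> g x + g w" by linarith
    have gnn: "g t \<ge> 0" for t by (simp add: g_def)
    have "\<mu> y + \<mu> z = ennreal (g y + g z)"
      using fin x0 h gnn by (simp add: ennreal_plus)
    also have "\<dots> \<le> ennreal (g x + g w)" using r by (rule ennreal_leI)
    also have "\<dots> = \<mu> x + \<mu> w"
      using fin x0 h gnn by (simp add: ennreal_plus)
    finally have "\<mu> y + \<mu> z \<le> \<mu> x + \<mu> w" .
    then have "pseudo_inv \<mu> (\<mu> x + \<mu> w) \<le> pseudo_inv \<mu> (\<mu> y + \<mu> z)" by (rule pinv_anti)
    then show ?thesis using fe h by simp
  qed
qed

end
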